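(* Let $(\mathcal A,U,\varphi)$ be a sequential formalism and $R\in\mathcal A$. Then: (1) if $\Rsh R$ is trivially inconsistent (i.e. some component of $\Rsh R$ is $\emptyset$), then $R$ is unsatisfiable; (2) if $R$ is satisfiable, then $\Rsh R$ is $\Rsh$-consistent; (3) every satisfiable basic relation is $\Rsh$-consistent.
   Context: A finite non-associative algebra is a tuple $(\mathcal A,\cup,\neg,\emptyset,\mathcal B,\diamond,\overline{\cdot},e)$ where $(\mathcal A,\cup,\neg,\emptyset,\mathcal B)$ is a finite Boolean algebra (with $x\cap y=\neg(\neg x\cup\neg y)$) and for all $x,y,z$: $\overline{\overline x}=x$, $\overline{x\cup y}=\overline x\cup\overline y$, $\overline{x\diamond y}=\overline y\diamond\overline x$, $e\diamond x=x\diamond e=x$, $x\diamond(y\cup z)=(x\diamond y)\cup(x\diamond z)$, $(x\diamond y)\cap\overline z=\emptyset\iff(y\diamond z)\cap\overline x=\emptyset$. $\mathcal B$ is the universal relation; $r\subseteq r'$ means $r\cup r'=r'$; atoms are basic relations. A projection operator from $\mathcal A$ to $\mathcal A'$ is a map $\Rsh$ with $\Rsh(r\cup r')=\Rsh r\cup\Rsh r'$ and $\Rsh\overline r=\overline{\Rsh r}$. A finite multi-algebra is a product $\mathcal A_1\times\cdots\times\mathcal A_m$ of finite non-associative algebras with projection operators $\Rsh_i^j:\mathcal A_i\to\mathcal A_j$ for all distinct $i,j$. Relations $R=(R_1,\dots,R_m)$; basic if all $R_i$ are atoms; universal relation $\mathcal B=(\mathcal B_1,\dots,\mathcal B_m)$;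 operations and $\subseteq$ componentwise; $B\in R$ means $B$ basic, $B\subseteq R$. $R$ is closed under projection if $R_j\subseteq\Rsh_i^jR_i$ for all distinct $i,j$; the projection closure $\Rsh R$ is obtained by repeatedly replacing $R_j$ by $R_j\cap\Rsh_i^jR_i$ until a fixed point. $R$ is $\Rsh$-consistent if it is closed under projection and $R_i\ne\emptyset$ for all $i$. A sequential formalism is $(\mathcal A,U,\varphi)$ with $\mathcal A$ a finite multi-algebra, $U\ne\emptyset$, $\varphi:\mathcal A\to 2^{U\times U}$ satisfying $\varphi(\Rsh R)=\varphi(R)$, $\varphi(\overline R)=\varphi(R)^{-1}$, $\varphi((\emptyset,\dots,\emptyset))=\emptyset$, $\varphi(R\diamond R')\supseteq(\varphi(R)\circ\varphi(R'))\cap\varphi(\mathcal B)$, $\varphi(R\cap R')=\varphi(R)\cap\varphi(R')$, $\varphi(R)=\bigcup_{B\in R}\varphi(B)$. $R$ is satisfiable if $\varphi(R)\ne\emptyset$. *)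

theory Defs
  imports Main
begin

record 'a nalg =
  carrier :: "'a set"
  cup   :: "'a \<Rightarrow> 'a \<Rightarrow> 'a"
  neg   :: "'a \<Rightarrow> 'a"
  emp   :: 'a
  univ  :: 'a
  comp  :: "'a \<Rightarrow> 'a \<Rightarrow> 'a"
  conv  :: "'a \<Rightarrow> 'a"
  ident :: 'a

definition cap :: "'a nalg \<Rightarrow> 'a \<Rightarrow> 'a \<Rightarrow> 'a" where
  "cap A x y = neg A (cup A (neg A x) (neg A y))"

definition subrel :: "'a nalg \<Rightarrow> 'a \<Rightarrow> 'a \<Rightarrow> bool" where
  "subrel A x y \<longleftrightarrow> cup A x y = y"

definition finite_boolean_algebra :: "'a nalg \<Rightarrow> bool" where
  "finite_boolean_algebra A \<longleftrightarrow>
     finite (carrier A) \<and> emp A \<in> carrier A \<and> univ A \<in> carrier A \<and>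
     (\<forall>x\<in>carrier A. neg A x \<in> carrier A) \<and>
     (\<forall>x\<in>carrier A. \<forall>y\<in>carrier A. cup A x y \<in> carrier A) \<and>
     (\<forall>x\<in>carrier A. \<forall>y\<in>carrier A. \<forall>z\<in>carrier A.
        cup A x y = cup A y x \<and> cap A x y = cap A y x \<and>
        cup A x (cup A y z) = cup A (cup A x y) z \<and>
        cap A x (cap A y z) = cap A (cap A x y) z \<and>
        cup A x (cap A x y) = x \<and> cap A x (cup A x y) = x \<and>
        cup A x (cap A y z) = cap A (cup A x y) (cup A x z) \<and>
        cap A x (cup A y z) = cup A (cap A x y) (cap A x z) \<and>
        cup A x (emp A) = x \<and> cap A x (univ A) = x \<and>
        cup A x (neg A x) = univ A \<and> cap A x (neg A x) = emp A)"

definition finite_nalg :: "'a nalg \<Rightarrow> bool" where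
  "finite_nalg A \<longleftrightarrow>
     finite_boolean_algebra A \<and> ident A \<in> carrier A \<and>
     (\<forall>x\<in>carrier A. conv A x \<in> carrier A) \<and>
     (\<forall>x\<in>carrier A. \<forall>y\<in>carrier A. comp A x y \<in> carrier A) \<and>
     (\<forall>x\<in>carrier A. \<forall>y\<in>carrier A. \<forall>z\<in>carrier A.
        conv A (conv A x) = x \<and>
        conv A (cup A x y) = cup A (conv A x) (conv A y) \<and>
        conv A (comp A x y) = comp A (conv A y) (conv A x) \<and>
        comp A (ident A) x = x \<and> comp A x (ident A) = x \<and>
        comp A x (cup A y z) = cup A (comp A x y) (comp A x z) \<and>
        ((cap A (comp A x y) (conv A z) = emp A) \<longleftrightarrow>
         (cap A (comp A y z) (conv A x) = emp A)))"

definition is_atom :: "'a nalg \<Rightarrow> 'a \<Rightarrow> bool" where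
  "is_atom A x \<longleftrightarrow> x \<in> carrier A \<and> x \<noteq> emp A \<and>
     (\<forall>y\<in>carrier A. subrel A y x \<longrightarrow> y = emp A \<or> y = x)"

definition projection_op :: "'a nalg \<Rightarrow> 'a nalg \<Rightarrow> ('a \<Rightarrow> 'a) \<Rightarrow> bool" where
  "projection_op A A' p \<longleftrightarrow>
     (\<forall>r\<in>carrier A. p r \<in> carrier A') \<and>
     (\<forall>r\<in>carrier A. \<forall>r'\<in>carrier A. p (cup A r r') = cup A' (p r) (p r')) \<and>
     (\<forall>r\<in>carrier A. p (conv A r) = conv A' (p r))"

definition multi_algebra :: "nat \<Rightarrow> (nat \<Rightarrow> 'a nalg) \<Rightarrow> (nat \<Rightarrow> nat \<Rightarrow> 'a \<Rightarrow> 'a) \<Rightarrow> bool" where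
  "multi_algebra m A P \<longleftrightarrow>
     (\<forall>i<m. finite_nalg (A i)) \<and>
     (\<forall>i<m. \<forall>j<m. i \<noteq> j \<longrightarrow> projection_op (A i) (A j) (P i j))"

definition is_rel :: "nat \<Rightarrow> (nat \<Rightarrow> 'a nalg) \<Rightarrow> 'a list \<Rightarrow> bool" where
  "is_rel m A R \<longleftrightarrow> length R = m \<and> (\<forall>i<m. R ! i \<in> carrier (A i))"

definition is_basic :: "nat \<Rightarrow> (nat \<Rightarrow> 'a nalg) \<Rightarrow> 'a list \<Rightarrow> bool" where
  "is_basic m A R \<longleftrightarrow> length R = m \<and> (\<forall>i<m. is_atom (A i) (R ! i))"

definition univM :: "nat \<Rightarrow> (nat \<Rightarrow> 'a nalg) \<Rightarrow> 'a list" where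
  "univM m A = map (\<lambda>i. univ (A i)) [0..<m]"

definition empM :: "nat \<Rightarrow> (nat \<Rightarrow> 'a nalg) \<Rightarrow> 'a list" where
  "empM m A = map (\<lambda>i. emp (A i)) [0..<m]"

definition convM :: "nat \<Rightarrow> (nat \<Rightarrow> 'a nalg) \<Rightarrow> 'a list \<Rightarrow> 'a list" where
  "convM m A R = map (\<lambda>i. conv (A i) (R ! i)) [0..<m]"

definition compM :: "nat \<Rightarrow> (nat \<Rightarrow> 'a nalg) \<Rightarrow> 'a list \<Rightarrow> 'a list \<Rightarrow> 'a list" where
  "compM m A R R' = map (\<lambda>i. comp (A i) (R ! i) (R' ! i)) [0..<m]"

definition capM :: "nat \<Rightarrow> (nat \<Rightarrow> 'a nalg) \<Rightarrow> 'a list \<Rightarrow> 'a list \<Rightarrow> 'a list" where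
  "capM m A R R' = map (\<lambda>i. cap (A i) (R ! i) (R' ! i)) [0..<m]"

definition subrelM :: "nat \<Rightarrow> (nat \<Rightarrow> 'a nalg) \<Rightarrow> 'a list \<Rightarrow> 'a list \<Rightarrow> bool" where
  "subrelM m A R R' \<longleftrightarrow> (\<forall>i<m. subrel (A i) (R ! i) (R' ! i))"

definition closed_proj :: "nat \<Rightarrow> (nat \<Rightarrow> 'a nalg) \<Rightarrow> (nat \<Rightarrow> nat \<Rightarrow> 'a \<Rightarrow> 'a) \<Rightarrow> 'a list \<Rightarrow> bool" where
  "closed_proj m A P R \<longleftrightarrow>
     (\<forall>i<m. \<forall>j<m. i \<noteq> j \<longrightarrow> subrel (A j) (R ! j) (P i j (R ! i)))"

definition proj_step :: "nat \<Rightarrow> (nat \<Rightarrow> 'a nalg) \<Rightarrow> (nat \<Rightarrow> nat \<Rightarrow> 'a \<Rightarrow> 'a) \<Rightarrow> 'a list \<Rightarrow> 'a list \<Rightarrow> bool" where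
  "proj_step m A P R S \<longleftrightarrow>
     (\<exists>i<m. \<exists>j<m. i \<noteq> j \<and> S = R[j := cap (A j) (R ! j) (P i j (R ! i))])"

text \<open>The projection closure: the fixed point reached by repeatedly applying steps
  (a fixed point of all steps is exactly a relation closed under projection).\<close>
definition proj_closure :: "nat \<Rightarrow> (nat \<Rightarrow> 'a nalg) \<Rightarrow> (nat \<Rightarrow> nat \<Rightarrow> 'a \<Rightarrow> 'a) \<Rightarrow> 'a list \<Rightarrow> 'a list" where
  "proj_closure m A P R =
     (SOME S. (proj_step m A P)\<^sup>*\<^sup>* R S \<and> (\<forall>S'. proj_step m A P S S' \<longrightarrow> S' = S))"

definition proj_consistent :: "nat \<Rightarrow> (nat \<Rightarrow> 'a nalg) \<Rightarrow> (nat \<Rightarrow> nat \<Rightarrow> 'a \<Rightarrow> 'a) \<Rightarrow> 'a list \<Rightarrow> bool" where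
  "proj_consistent m A P R \<longleftrightarrow> closed_proj m A P R \<and> (\<forall>i<m. R ! i \<noteq> emp (A i))"

definition trivially_inconsistent :: "nat \<Rightarrow> (nat \<Rightarrow> 'a nalg) \<Rightarrow> 'a list \<Rightarrow> bool" where
  "trivially_inconsistent m A R \<longleftrightarrow> (\<exists>i<m. R ! i = emp (A i))"

definition sequential_formalism ::
  "nat \<Rightarrow> (nat \<Rightarrow> 'a nalg) \<Rightarrow> (nat \<Rightarrow> nat \<Rightarrow> 'a \<Rightarrow> 'a) \<Rightarrow> 'u set \<Rightarrow> ('a list \<Rightarrow> ('u \<times> 'u) set) \<Rightarrow> bool" where
  "sequential_formalism m A P U \<phi> \<longleftrightarrow>
     multi_algebra m A P \<and> U \<noteq> {} \<and>
     (\<forall>R. is_rel m A R \<longrightarrow> \<phi> R \<subseteq> U \<times> U) \<and>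
     (\<forall>R. is_rel m A R \<longrightarrow> \<phi> (proj_closure m A P R) = \<phi> R) \<and>
     (\<forall>R. is_rel m A R \<longrightarrow> \<phi> (convM m A R) = (\<phi> R)\<inverse>) \<and>
     \<phi> (empM m A) = {} \<and>
     (\<forall>R R'. is_rel m A R \<longrightarrow> is_rel m A R' \<longrightarrow>
        \<phi> (compM m A R R') \<supseteq> (\<phi> R O \<phi> R') \<inter> \<phi> (univM m A)) \<and>
     (\<forall>R R'. is_rel m A R \<longrightarrow> is_rel m A R' \<longrightarrow>
        \<phi> (capM m A R R') = \<phi> R \<inter> \<phi> R') \<and>
     (\<forall>R. is_rel m A R \<longrightarrow>
        \<phi> R = (\<Union>B\<in>{B. is_basic m A B \<and> subrelM m A B R}. \<phi> B))"

end

theory Submission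
  imports Defs
begin

lemma fba_ax:
  assumes "finite_boolean_algebra A" "x \<in> carrier A" "y \<in> carrier A" "z \<in> carrier A"
  shows "cup A x y = cup A y x \<and> cap A x y = cap A y x \<and>
        cup A x (cup A y z) = cup A (cup A x y) z \<and>
        cap A x (cap A y z) = cap A (cap A x y) z \<and>
        cup A x (cap A x y) = x \<and> cap A x (cup A x y) = x \<and>
        cup A x (cap A y z) = cap A (cup A x y) (cup A x z) \<and>
        cap A x (cup A y z) = cup A (cap A x y) (cap A x z) \<and>
        cup A x (emp A) = x \<and> cap A x (univ A) = x \<and>
        cup A x (neg A x) = univ A \<and> cap A x (neg A x) = emp A"
proof -
  have "\<forall>x\<in>carrier A. \<forall>y\<in>carrier A. \<forall>z\<in>carrier A.
        cup A x y = cup A y x \<and> cap A x y = cap A y x \<and>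
        cup A x (cup A y z) = cup A (cup A x y) z \<and>
        cap A x (cap A y z) = cap A (cap A x y) z \<and>
        cup A x (cap A x y) = x \<and> cap A x (cup A x y) = x \<and>
        cup A x (cap A y z) = cap A (cup A x y) (cup A x z) \<and>
        cap A x (cup A y z) = cup A (cap A x y) (cap A x z) \<and>
        cup A x (emp A) = x \<and> cap A x (univ A) = x \<and>
        cup A x (neg A x) = univ A \<and> cap A x (neg A x) = emp A"
    using assms(1) unfolding finite_boolean_algebra_def by (elim conjE)
  then show ?thesis using assms(2-4) by (elim ballE) auto
qed

lemma fba_cl:
  assumes "finite_boolean_algebra A"
  shows "finite (carrier A)" "emp A \<in> carrier A" "\<And>x. x \<in> carrier A \<Longrightarrow> neg A x \<in> carrier A"
    "\<And>x y. x \<in> carrier A \<Longrightarrow> y \<in> carrier A \<Longrightarrow> cup A x y \<in> carrier A"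
  using assms unfolding finite_boolean_algebra_def by auto

lemma cap_closed:
  assumes "finite_boolean_algebra A" "x \<in> carrier A" "y \<in> carrier A"
  shows "cap A x y \<in> carrier A"
  unfolding cap_def using fba_cl[OF assms(1)] assms by simp

lemma cap_sub:
  assumes "finite_boolean_algebra A" "x \<in> carrier A" "y \<in> carrier A"
  shows "subrel A (cap A x y) x"
proof -
  have "cup A x (cap A x y) = x" "cup A x (cap A x y) = cup A (cap A x y) x"
    using fba_ax[OF assms(1,2,3,3)] fba_ax[OF assms(1,2) cap_closed[OF assms] assms(3)] by auto
  then show ?thesis unfolding subrel_def by simp
qed

lemma cap_eq_sub:
  assumes "finite_boolean_algebra A" "x \<in> carrier A" "y \<in> carrier A" "cap A x y = x"
  shows "subrel A x y"
proof -
  have c: "cap A x y = cap A y x" "cup A y (cap A y x) = y"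
    "cup A (cap A x y) y = cup A y (cap A x y)"
    using fba_ax[OF assms(1,2,3,3)] fba_ax[OF assms(1,3,2,2)]
      fba_ax[OF assms(1) cap_closed[OF assms(1-3)] assms(3,3)] by auto
  have "cup A x y = cup A (cap A x y) y" using assms(4) by simp
  also have "\<dots> = y" using c by simp
  finally show ?thesis unfolding subrel_def .
qed

lemma sub_emp:
  assumes "finite_boolean_algebra A" "x \<in> carrier A" "subrel A x (emp A)"
  shows "x = emp A"
  using assms fba_ax[OF assms(1,2,2,2)] unfolding subrel_def by simp

lemma sub_trans:
  assumes "finite_boolean_algebra A" "x \<in> carrier A" "y \<in> carrier A" "z \<in> carrier A"
    "subrel A x y" "subrel A y z"
  shows "subrel A x z"
  using assms fba_ax[OF assms(1,2,3,4)] unfolding subrel_def by simp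

lemma sub_antisym:
  assumes "finite_boolean_algebra A" "x \<in> carrier A" "y \<in> carrier A"
    "subrel A x y" "subrel A y x"
  shows "x = y"
  using assms fba_ax[OF assms(1,2,3,3)] unfolding subrel_def by simp

lemma sub_refl:
  assumes "finite_boolean_algebra A" "x \<in> carrier A"
  shows "subrel A x x"
proof -
  have c: "cup A x x \<in> carrier A" using fba_cl(4)[OF assms(1) assms(2,2)] .
  have "cup A x (cap A x (cup A x x)) = x" "cap A x (cup A x x) = x"
    using fba_ax[OF assms(1,2) c c] fba_ax[OF assms(1,2,2,2)] by auto
  then show ?thesis unfolding subrel_def by simp
qed

definition down :: "'a nalg \<Rightarrow> 'a \<Rightarrow> 'a set" where
  "down A x = {y \<in> carrier A. subrel A y x}"

lemma down_strict:
  assumes "finite_boolean_algebra A" "x \<in> carrier A" "y \<in> carrier A"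
    "subrel A x y" "x \<noteq> y"
  shows "card (down A x) < card (down A y)"
proof -
  have f: "finite (down A y)" using fba_cl(1)[OF assms(1)] unfolding down_def by auto
  have "down A x \<subset> down A y"
  proof
    show "down A x \<subseteq> down A y" unfolding down_def using sub_trans[OF assms(1)] assms by blast
    have "y \<in> down A y" using sub_refl[OF assms(1,3)] assms(3) unfolding down_def by auto
    moreover have "y \<notin> down A x" using sub_antisym[OF assms(1-4)] assms(5) unfolding down_def by auto
    ultimately show "down A x \<noteq> down A y" by blast
  qed
  then show ?thesis using f psubset_card_mono by blast
qed

definition mu :: "nat \<Rightarrow> (nat \<Rightarrow> 'a nalg) \<Rightarrow> 'a list \<Rightarrow> nat" where
  "mu m A S = (\<Sum>j<m. card (down (A j) (S ! j)))"

lemma fba_of: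
  assumes "multi_algebra m A P" "i < m"
  shows "finite_boolean_algebra (A i)"
  using assms unfolding multi_algebra_def finite_nalg_def by blast

lemma proj_in:
  assumes "multi_algebra m A P" "i < m" "j < m" "i \<noteq> j" "x \<in> carrier (A i)"
  shows "P i j x \<in> carrier (A j)"
  using assms unfolding multi_algebra_def projection_op_def by blast

lemma step_facts:
  assumes ma: "multi_algebra m A P" and r: "is_rel m A S" and st: "proj_step m A P S S'"
  shows "is_rel m A S' \<and> (\<forall>k<m. subrel (A k) (S' ! k) (S ! k)) \<and> (S' \<noteq> S \<longrightarrow> mu m A S' < mu m A S)"
proof -
  obtain i j where ij: "i < m" "j < m" "i \<noteq> j" and S': "S' = S[j := cap (A j) (S ! j) (P i j (S ! i))]"
    using st unfolding proj_step_def by blast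
  have len: "length S = m" using r unfolding is_rel_def by auto
  have fj: "finite_boolean_algebra (A j)" using fba_of[OF ma ij(2)] .
  have Sj: "S ! j \<in> carrier (A j)" using r ij unfolding is_rel_def by auto
  have Si: "S ! i \<in> carrier (A i)" using r ij unfolding is_rel_def by auto
  have Pj: "P i j (S ! i) \<in> carrier (A j)" using proj_in[OF ma ij Si] .
  have cc: "cap (A j) (S ! j) (P i j (S ! i)) \<in> carrier (A j)" using cap_closed[OF fj Sj Pj] .
  have rel: "is_rel m A S'" unfolding is_rel_def
  proof (intro conjI allI impI)
    show "length S' = m" using len S' by simp
    fix k assume k: "k < m"
    show "S' ! k \<in> carrier (A k)"
    proof (cases "k = j")
      case True then show ?thesis using cc len ij S' by simp
    next
      case False then show ?thesis using r k S' unfolding is_rel_def by simp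
    qed
  qed
  have sub: "\<forall>k<m. subrel (A k) (S' ! k) (S ! k)"
  proof (intro allI impI)
    fix k assume k: "k < m"
    show "subrel (A k) (S' ! k) (S ! k)"
    proof (cases "k = j")
      case True then show ?thesis using cap_sub[OF fj Sj Pj] len ij S' by simp
    next
      case False then show ?thesis using sub_refl[OF fba_of[OF ma k]] r k S' unfolding is_rel_def by simp
    qed
  qed
  have dec: "S' \<noteq> S \<longrightarrow> mu m A S' < mu m A S"
  proof
    assume ne: "S' \<noteq> S"
    have nej: "S' ! j \<noteq> S ! j"
    proof
      assume "S' ! j = S ! j"
      then have "S' = S" using S' len ij by (metis list_update_id nth_list_update_eq)
      then show False using ne by simp
    qed
    show "mu m A S' < mu m A S" unfolding mu_def
    proof (rule sum_strict_mono_ex1)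
      show "finite {..<m}" by simp
      show "\<forall>k\<in>{..<m}. card (down (A k) (S' ! k)) \<le> card (down (A k) (S ! k))"
      proof
        fix k assume "k \<in> {..<m}"
        then have k: "k < m" by simp
        show "card (down (A k) (S' ! k)) \<le> card (down (A k) (S ! k))"
        proof (cases "S' ! k = S ! k")
          case False
          then show ?thesis using down_strict[OF fba_of[OF ma k]] sub k rel r unfolding is_rel_def
            by (meson less_imp_le)
        qed simp
      qed
      show "\<exists>k\<in>{..<m}. card (down (A k) (S' ! k)) < card (down (A k) (S ! k))"
        using down_strict[OF fj] nej sub ij rel r unfolding is_rel_def by blast
    qed
  qed
  show ?thesis using rel sub dec by blast
qed

lemma star_facts:
  assumes ma: "multi_algebra m A P" and st: "(proj_step m A P)\<^sup>*\<^sup>* S S'" and r: "is_rel m A S"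
  shows "is_rel m A S' \<and> (\<forall>k<m. subrel (A k) (S' ! k) (S ! k))"
  using st
proof (induction rule: rtranclp_induct)
  case base
  have "\<forall>k<m. subrel (A k) (S ! k) (S ! k)"
  proof (intro allI impI)
    fix k assume k: "k < m"
    have "S ! k \<in> carrier (A k)" using r k unfolding is_rel_def by simp
    then show "subrel (A k) (S ! k) (S ! k)" using sub_refl[OF fba_of[OF ma k]] by simp
  qed
  then show ?case using r by simp
next
  case (step y z)
  have y: "is_rel m A y" "\<forall>k<m. subrel (A k) (y ! k) (S ! k)" using step.IH by simp_all
  have z: "is_rel m A z" "\<forall>k<m. subrel (A k) (z ! k) (y ! k)" using step_facts[OF ma y(1) step.hyps(2)] by simp_all
  have "\<forall>k<m. subrel (A k) (z ! k) (S ! k)"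
  proof (intro allI impI)
    fix k assume k: "k < m"
    have c: "S ! k \<in> carrier (A k)" "y ! k \<in> carrier (A k)" "z ! k \<in> carrier (A k)"
      using r y(1) z(1) k unfolding is_rel_def by simp_all
    show "subrel (A k) (z ! k) (S ! k)"
      using sub_trans[OF fba_of[OF ma k] c(3) c(2) c(1)] y(2) z(2) k by simp
  qed
  then show ?case using z(1) by simp
qed

lemma fix_exists:
  assumes ma: "multi_algebra m A P"
  shows "is_rel m A S \<Longrightarrow> \<exists>T. (proj_step m A P)\<^sup>*\<^sup>* S T \<and> (\<forall>T'. proj_step m A P T T' \<longrightarrow> T' = T)"
proof (induction "mu m A S" arbitrary: S rule: less_induct)
  case less
  show ?case
  proof (cases "\<forall>T'. proj_step m A P S T' \<longrightarrow> T' = S")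
    case True then show ?thesis by blast
  next
    case False
    then obtain S' where s: "proj_step m A P S S'" "S' \<noteq> S" by blast
    then have "is_rel m A S'" "mu m A S' < mu m A S" using step_facts[OF ma less.prems] by blast+
    then obtain T where "(proj_step m A P)\<^sup>*\<^sup>* S' T" "\<forall>T'. proj_step m A P T T' \<longrightarrow> T' = T"
      using less.hyps by blast
    then show ?thesis using s(1) by (meson converse_rtranclp_into_rtranclp)
  qed
qed

lemma closure_facts:
  assumes ma: "multi_algebra m A P" and r: "is_rel m A R"
  shows "is_rel m A (proj_closure m A P R) \<and> (\<forall>k<m. subrel (A k) (proj_closure m A P R ! k) (R ! k))
     \<and> closed_proj m A P (proj_closure m A P R)"
proof -
  let ?Q = "\<lambda>S. (proj_step m A P)\<^sup>*\<^sup>* R S \<and> (\<forall>S'. proj_step m A P S S' \<longrightarrow> S' = S)"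
  have "?Q (proj_closure m A P R)" unfolding proj_closure_def
    using fix_exists[OF ma r] by (rule someI_ex)
  then obtain S where S: "S = proj_closure m A P R" "(proj_step m A P)\<^sup>*\<^sup>* R S"
    "\<forall>S'. proj_step m A P S S' \<longrightarrow> S' = S" by blast
  have f: "is_rel m A S" "\<forall>k<m. subrel (A k) (S ! k) (R ! k)" using star_facts[OF ma S(2) r] by blast+
  have "closed_proj m A P S" unfolding closed_proj_def
  proof (intro allI impI)
    fix i j assume ij: "i < m" "j < m" "i \<noteq> j"
    have len: "length S = m" using f unfolding is_rel_def by auto
    have "S[j := cap (A j) (S ! j) (P i j (S ! i))] = S" using S(3) ij unfolding proj_step_def by blast
    then have "cap (A j) (S ! j) (P i j (S ! i)) = S ! j" using len ij by (metis nth_list_update_eq)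
    then show "subrel (A j) (S ! j) (P i j (S ! i))"
      using cap_eq_sub[OF fba_of[OF ma ij(2)]] proj_in[OF ma ij] f ij unfolding is_rel_def by blast
  qed
  then show ?thesis using f S(1) by blast
qed

lemma emp_comp_phi:
  assumes sf: "sequential_formalism m A P U \<phi>" and r: "is_rel m A S" and i: "i < m" "S ! i = emp (A i)"
  shows "\<phi> S = {}"
proof -
  have ma: "multi_algebra m A P" using sf unfolding sequential_formalism_def by blast
  have "\<not> (is_basic m A B \<and> subrelM m A B S)" for B
  proof
    assume b: "is_basic m A B \<and> subrelM m A B S"
    then have "is_atom (A i) (B ! i)" "subrel (A i) (B ! i) (emp (A i))"
      using i unfolding is_basic_def subrelM_def by auto
    then show False using sub_emp[OF fba_of[OF ma i(1)]] unfolding is_atom_def by blast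
  qed
  moreover have "\<phi> S = (\<Union>B\<in>{B. is_basic m A B \<and> subrelM m A B S}. \<phi> B)"
    using sf r unfolding sequential_formalism_def by blast
  ultimately show ?thesis by blast
qed

lemma sf_ma:
  assumes "sequential_formalism m A P U \<phi>"
  shows "multi_algebra m A P"
  using assms unfolding sequential_formalism_def by (elim conjE)

lemma sf_pc:
  assumes "sequential_formalism m A P U \<phi>" "is_rel m A S"
  shows "\<phi> (proj_closure m A P S) = \<phi> S"
proof -
  have "\<forall>R. is_rel m A R \<longrightarrow> \<phi> (proj_closure m A P R) = \<phi> R"
    using assms(1) unfolding sequential_formalism_def by (elim conjE)
  then show ?thesis using assms(2) by simp
qed

lemma part1:
  assumes sf: "sequential_formalism m A P U \<phi>" and s: "is_rel m A S"
    and t: "trivially_inconsistent m A (proj_closure m A P S)"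
  shows "\<phi> S = {}"
proof -
  have ma: "multi_algebra m A P" using sf_ma[OF sf] .
  obtain i where i: "i < m" "proj_closure m A P S ! i = emp (A i)"
    using t unfolding trivially_inconsistent_def by blast
  have "is_rel m A (proj_closure m A P S)" using closure_facts[OF ma s] by simp
  then have "\<phi> (proj_closure m A P S) = {}" using emp_comp_phi[OF sf _ i] by simp
  then show ?thesis using sf_pc[OF sf s] by simp
qed

lemma part2:
  assumes sf: "sequential_formalism m A P U \<phi>" and s: "is_rel m A S" and ne: "\<phi> S \<noteq> {}"
  shows "proj_consistent m A P (proj_closure m A P S)"
proof -
  have ma: "multi_algebra m A P" using sf_ma[OF sf] .
  have "\<not> trivially_inconsistent m A (proj_closure m A P S)" using part1[OF sf s] ne by blast
  then have "\<forall>i<m. proj_closure m A P S ! i \<noteq> emp (A i)" unfolding trivially_inconsistent_def by simp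
  moreover have "closed_proj m A P (proj_closure m A P S)" using closure_facts[OF ma s] by simp
  ultimately show ?thesis unfolding proj_consistent_def by simp
qed

lemma part3:
  assumes sf: "sequential_formalism m A P U \<phi>" and b: "is_basic m A B" and ne: "\<phi> B \<noteq> {}"
  shows "proj_consistent m A P B"
proof -
  have ma: "multi_algebra m A P" using sf_ma[OF sf] .
  have s: "is_rel m A B" unfolding is_rel_def
  proof (intro conjI allI impI)
    show "length B = m" using b unfolding is_basic_def by simp
    fix k assume "k < m"
    then have "is_atom (A k) (B ! k)" using b unfolding is_basic_def by simp
    then show "B ! k \<in> carrier (A k)" unfolding is_atom_def by simp
  qed
  let ?C = "proj_closure m A P B"
  have pcC: "proj_consistent m A P ?C" using part2[OF sf s ne] .
  have cf: "is_rel m A ?C" "\<forall>k<m. subrel (A k) (?C ! k) (B ! k)" using closure_facts[OF ma s] by simp_all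
  have lenC: "length ?C = m" using cf(1) unfolding is_rel_def by simp
  have lenB: "length B = m" using s unfolding is_rel_def by simp
  have "?C = B"
  proof (rule nth_equalityI)
    show "length ?C = length B" using lenC lenB by simp
    fix k assume "k < length ?C"
    then have k: "k < m" using lenC by simp
    have at: "is_atom (A k) (B ! k)" using b k unfolding is_basic_def by simp
    have ne: "?C ! k \<noteq> emp (A k)" using pcC k unfolding proj_consistent_def by simp
    have inC: "?C ! k \<in> carrier (A k)" using cf(1) k unfolding is_rel_def by simp
    have sb: "subrel (A k) (?C ! k) (B ! k)" using cf(2) k by simp
    have "\<forall>y\<in>carrier (A k). subrel (A k) y (B ! k) \<longrightarrow> y = emp (A k) \<or> y = B ! k"
      using at unfolding is_atom_def by simp
    then show "?C ! k = B ! k" using inC sb ne by blast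
  qed
  then show ?thesis using pcC by simp
qed

theorem proposition4p25:
  fixes m :: nat and A :: "nat \<Rightarrow> 'a nalg" and P :: "nat \<Rightarrow> nat \<Rightarrow> 'a \<Rightarrow> 'a"
    and U :: "'u set" and \<phi> :: "'a list \<Rightarrow> ('u \<times> 'u) set" and R :: "'a list"
  assumes "sequential_formalism m A P U \<phi>"
    and "is_rel m A R"
  shows "(trivially_inconsistent m A (proj_closure m A P R) \<longrightarrow> \<phi> R = {})
       \<and> (\<phi> R \<noteq> {} \<longrightarrow> proj_consistent m A P (proj_closure m A P R))
       \<and> (\<forall>B. is_basic m A B \<longrightarrow> \<phi> B \<noteq> {} \<longrightarrow> proj_consistent m A P B)"
  using part1[OF assms] part2[OF assms] part3[OF assms(1)] by blast

end
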